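(* Fix $\alpha\in(0,1]$, $\epsilon>0$, a function $A:(2\pi,\infty)\to[0,\infty)$ and a function $B:\{(\beta_L,\beta_R)\in(0,\infty)^2:\beta_L\beta_R>4\pi^2\}\to[0,\infty)$. Consider the class $\mathcal{C}$ of all unitary, modular invariant 2D CFT spectra (any central charge $c\geqslant0$) that have a normalizable vacuum ($n_{0,0}\geqslant1$) and satisfy $$\sum_{h+\bar h\leqslant\frac c{12}+\epsilon}n_{h,\bar h}e^{-(h+\bar h)\beta}\leqslant A(\beta)\ \ (\beta>2\pi),\qquad \sum_{\min(h,\bar h)\leqslant\frac{\alpha c}{24}}n_{h,\bar h}e^{-h\beta_L-\bar h\beta_R}\leqslant B(\beta_L,\beta_R)\ \ (\beta_L\beta_R>4\pi^2).$$ Then for each $(\beta_L,\beta_R)\in\mathcal{D}_\alpha$ there is a constant $K<\infty$ (depending on $\beta_L,\beta_R$ and the fixed data $\alpha,\epsilon,A,B$, but not on the theory or on $c$) such that every theory in $\mathcal{C}$ satisfies $\left|\log Z(\beta_L,\beta_R)-\frac c{24}(\beta_L+\beta_R)\right|\leqslant K$; and for each $(\beta_L,\beta_R)$ with $(4\pi^2/\beta_L,4\pi^2/\beta_R)\in\mathcal{D}_\alpha$ there is such a constant $K$ with $\left|\log Z(\beta_L,\beta_R)-\frac{\pi^2c}{6}\left(\frac1{\beta_L}+\frac1{\beta_R}\right)\right|\leqslant K$ for every theory in $\mathcal{C}$. In particular, as $c\to\infty$ with $\beta_L,\beta_R$ fixed, $\log Z=\frac c{24}(\beta_L+\beta_R)+O(1)$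 on $\mathcal{D}_\alpha$ and $\log Z=\frac{\pi^2c}{6}(\frac1{\beta_L}+\frac1{\beta_R})+O(1)$ on its image under $(\beta_L,\beta_R)\mapsto(4\pi^2/\beta_L,4\pi^2/\beta_R)$.
   Context: A unitary, modular invariant 2D CFT spectrum consists of a real number $c\geqslant0$ (central charge) and a countable collection of pairs $(h,\bar h)$ with $h,\bar h\geqslant0$, each with multiplicity $n_{h,\bar h}\in\mathbb{N}$, such that $Z(\beta_L,\beta_R)=\sum_{h,\bar h}n_{h,\bar h}e^{-(h-\frac c{24})\beta_L-(\bar h-\frac c{24})\beta_R}$ is finite for all $\beta_L,\beta_R>0$ and $Z(\beta_L,\beta_R)=Z(4\pi^2/\beta_L,4\pi^2/\beta_R)$. Let $\phi_\alpha(\beta)=\max\left\{\frac{4\pi^2}{\beta},\ \frac12\left(\alpha(4\pi-\beta)+\sqrt{\alpha^2(4\pi-\beta)^2+16\pi^2(1-\alpha)}\right)\right\}$ and $\mathcal{D}_\alpha=\{\beta_R>2\pi,\ \beta_L>\phi_\alpha(\beta_R)\}\cup\{\beta_L>2\pi,\ \beta_R>\phi_\alpha(\beta_L)\}\subset(0,\infty)^2$. *)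

theory Defs
  imports "HOL-Analysis.Analysis"
begin

text \<open>A spectrum is given by a central charge c and a multiplicity function
  n :: real \<times> real \<Rightarrow> nat, where n (h, hb) is the multiplicity of the pair (h, hb);
  pairs not in the spectrum have multiplicity 0.\<close>

definition partition_fn :: "real \<Rightarrow> (real \<times> real \<Rightarrow> nat) \<Rightarrow> real \<Rightarrow> real \<Rightarrow> real" where
  "partition_fn c n bL bR =
     (\<Sum>\<^sub>\<infinity>(h, hb)\<in>UNIV. real (n (h, hb)) * exp (- (h - c/24) * bL - (hb - c/24) * bR))"

definition unitary_modular_cft :: "real \<Rightarrow> (real \<times> real \<Rightarrow> nat) \<Rightarrow> bool" where
  "unitary_modular_cft c n \<longleftrightarrow>
     c \<ge> 0 \<and>
     countable {p. n p > 0} \<and>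
     (\<forall>h hb. n (h, hb) > 0 \<longrightarrow> h \<ge> 0 \<and> hb \<ge> 0) \<and>
     (\<forall>bL bR. bL > 0 \<longrightarrow> bR > 0 \<longrightarrow>
        (\<lambda>(h, hb). real (n (h, hb)) * exp (- (h - c/24) * bL - (hb - c/24) * bR)) summable_on UNIV) \<and>
     (\<forall>bL bR. bL > 0 \<longrightarrow> bR > 0 \<longrightarrow>
        partition_fn c n bL bR = partition_fn c n (4*pi^2/bL) (4*pi^2/bR))"

definition phi_alpha :: "real \<Rightarrow> real \<Rightarrow> real" where
  "phi_alpha \<alpha> \<beta> = max (4*pi^2/\<beta>)
     ((\<alpha> * (4*pi - \<beta>) + sqrt (\<alpha>^2 * (4*pi - \<beta>)^2 + 16*pi^2*(1 - \<alpha>))) / 2)"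

definition D_alpha :: "real \<Rightarrow> (real \<times> real) set" where
  "D_alpha \<alpha> = {(bL, bR). bR > 2*pi \<and> bL > phi_alpha \<alpha> bR}
              \<union> {(bL, bR). bL > 2*pi \<and> bR > phi_alpha \<alpha> bL}"

definition in_class :: "real \<Rightarrow> real \<Rightarrow> (real \<Rightarrow> real) \<Rightarrow> (real \<Rightarrow> real \<Rightarrow> real)
    \<Rightarrow> real \<Rightarrow> (real \<times> real \<Rightarrow> nat) \<Rightarrow> bool" where
  "in_class \<alpha> \<epsilon> A B c n \<longleftrightarrow>
     unitary_modular_cft c n \<and> n (0, 0) \<ge> 1 \<and>
     (\<forall>\<beta>. \<beta> > 2*pi \<longrightarrow>
        (\<Sum>\<^sub>\<infinity>(h, hb)\<in>{(h, hb). h + hb \<le> c/12 + \<epsilon>}. real (n (h, hb)) * exp (- (h + hb) * \<beta>)) \<le> A \<beta>) \<and>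
     (\<forall>bL bR. bL > 0 \<longrightarrow> bR > 0 \<longrightarrow> bL * bR > 4*pi^2 \<longrightarrow>
        (\<Sum>\<^sub>\<infinity>(h, hb)\<in>{(h, hb). min h hb \<le> \<alpha> * c / 24}. real (n (h, hb)) * exp (- h * bL - hb * bR)) \<le> B bL bR)"

end

theory Submission
  imports Defs
begin



definition tm :: "real \<Rightarrow> (real \<times> real \<Rightarrow> nat) \<Rightarrow> real \<Rightarrow> real \<Rightarrow> real \<times> real \<Rightarrow> real" where
  "tm c n bL bR = (\<lambda>(h, hb). real (n (h, hb)) * exp (- (h - c/24) * bL - (hb - c/24) * bR))"

lemma Z_tm: "partition_fn c n bL bR = infsum (tm c n bL bR) UNIV"
  unfolding partition_fn_def tm_def by simp

lemma tm_nonneg: "tm c n bL bR p \<ge> 0"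
  unfolding tm_def by (cases p) auto

lemma tm_summable:
  assumes "unitary_modular_cft c n" "bL > 0" "bR > 0"
  shows "tm c n bL bR summable_on S"
proof -
  have "tm c n bL bR summable_on UNIV"
    using assms unfolding unitary_modular_cft_def tm_def by blast
  then show ?thesis using summable_on_subset_banach by blast
qed

lemma shift:
  assumes cft: "unitary_modular_cft c n" and b1: "0 < \<beta>1" "\<beta>1 \<le> bL" and b2: "0 < \<beta>2" "\<beta>2 \<le> bR"
    and th: "\<theta> \<le> 1"
    and hS: "\<And>h hb. (h, hb) \<in> S \<Longrightarrow> n (h, hb) > 0 \<Longrightarrow> \<theta>*c/24 \<le> h \<and> \<theta>*c/24 \<le> hb"
  shows "infsum (tm c n bL bR) S \<le> exp ((1-\<theta>)*c*(bL-\<beta>1+bR-\<beta>2)/24) * infsum (tm c n \<beta>1 \<beta>2) S"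
proof -
  let ?E = "exp ((1-\<theta>)*c*(bL-\<beta>1+bR-\<beta>2)/24)"
  have "infsum (tm c n bL bR) S \<le> infsum (\<lambda>p. ?E * tm c n \<beta>1 \<beta>2 p) S"
  proof (rule infsum_mono)
    show "tm c n bL bR summable_on S" using tm_summable cft b1 b2 by auto
    show "(\<lambda>p. ?E * tm c n \<beta>1 \<beta>2 p) summable_on S"
      using tm_summable[OF cft b1(1) b2(1)] summable_on_cmult_right by blast
    fix p assume pS: "p \<in> S"
    obtain h hb where p: "p = (h, hb)" by (cases p)
    show "tm c n bL bR p \<le> ?E * tm c n \<beta>1 \<beta>2 p"
    proof (cases "n (h, hb) > 0")
      case False then show ?thesis by (simp add: p tm_def)
    next
      case True
      with hS pS p have hh: "\<theta>*c/24 \<le> h" "\<theta>*c/24 \<le> hb" by auto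
      have m1: "(c/24 - h) * (bL - \<beta>1) \<le> ((1-\<theta>)*c/24) * (bL - \<beta>1)"
        by (rule mult_right_mono) (use hh b1 in \<open>auto simp: algebra_simps\<close>)
      have m2: "(c/24 - hb) * (bR - \<beta>2) \<le> ((1-\<theta>)*c/24) * (bR - \<beta>2)"
        by (rule mult_right_mono) (use hh b2 in \<open>auto simp: algebra_simps\<close>)
      have "- (h - c/24) * bL - (hb - c/24) * bR \<le> (1-\<theta>)*c*(bL-\<beta>1+bR-\<beta>2)/24 + (- (h - c/24) * \<beta>1 - (hb - c/24) * \<beta>2)"
        using m1 m2 by (simp add: field_simps)
      then have "exp (- (h - c/24) * bL - (hb - c/24) * bR) \<le> ?E * exp (- (h - c/24) * \<beta>1 - (hb - c/24) * \<beta>2)"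
        by (simp add: exp_add[symmetric])
      then show ?thesis unfolding p tm_def by (simp add: mult_left_mono algebra_simps)
    qed
  qed
  also have "\<dots> = ?E * infsum (tm c n \<beta>1 \<beta>2) S"
    by (rule infsum_cmult_right) (use tm_summable[OF cft b1(1) b2(1)] in auto)
  finally show ?thesis .
qed


lemma split_infsum:
  assumes "unitary_modular_cft c n" "bL > 0" "bR > 0"
  shows "infsum (tm c n bL bR) UNIV = infsum (tm c n bL bR) S + infsum (tm c n bL bR) (-S)"
proof -
  have "infsum (tm c n bL bR) (S \<union> -S) = infsum (tm c n bL bR) S + infsum (tm c n bL bR) (-S)"
    by (rule infsum_Un_disjoint) (use tm_summable[OF assms] in auto)
  then show ?thesis by simp
qed

lemma sub_le:
  assumes "unitary_modular_cft c n" "bL > 0" "bR > 0"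
  shows "infsum (tm c n bL bR) S \<le> infsum (tm c n bL bR) UNIV"
  by (rule infsum_mono_neutral) (use tm_summable[OF assms] tm_nonneg in auto)

lemma vacuum:
  assumes "in_class \<alpha> \<epsilon> A B c n" "bL > 0" "bR > 0"
  shows "partition_fn c n bL bR \<ge> exp (c*(bL+bR)/24)"
proof -
  have cft: "unitary_modular_cft c n" and n0: "n (0,0) \<ge> 1" using assms(1) unfolding in_class_def by auto
  have "infsum (tm c n bL bR) {(0,0)} \<le> infsum (tm c n bL bR) UNIV"
    by (rule sub_le[OF cft assms(2,3)])
  moreover have "infsum (tm c n bL bR) {(0,0)} = real (n (0,0)) * exp (c*(bL+bR)/24)"
    by (simp add: tm_def algebra_simps add_divide_distrib)
  moreover have "real (n (0,0)) * exp (c*(bL+bR)/24) \<ge> exp (c*(bL+bR)/24)"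
    using n0 by simp
  ultimately show ?thesis unfolding Z_tm by linarith
qed

lemma Mbound:
  assumes "in_class \<alpha> \<epsilon> A B c n" "bL > 0" "bR > 0" "bL * bR > 4*pi^2"
  shows "infsum (tm c n bL bR) {(h, hb). min h hb \<le> \<alpha> * c / 24} \<le> exp (c*(bL+bR)/24) * B bL bR"
proof -
  let ?M = "{(h, hb). min h hb \<le> \<alpha> * c / 24}"
  let ?g = "\<lambda>(h, hb). real (n (h, hb)) * exp (- h * bL - hb * bR)"
  have Bb: "infsum ?g ?M \<le> B bL bR" using assms unfolding in_class_def by auto
  have "infsum (tm c n bL bR) ?M = infsum (\<lambda>p. exp (c*(bL+bR)/24) * ?g p) ?M"
  proof (rule infsum_cong)
    fix p :: "real \<times> real"
    obtain h hb where p: "p = (h, hb)" by (cases p)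
    have "exp (- (h - c/24) * bL - (hb - c/24) * bR) = exp (c*(bL+bR)/24) * exp (- h * bL - hb * bR)"
      by (simp add: exp_add[symmetric] algebra_simps add_divide_distrib)
    then show "tm c n bL bR p = exp (c*(bL+bR)/24) * ?g p" by (simp add: p tm_def)
  qed
  also have "\<dots> = exp (c*(bL+bR)/24) * infsum ?g ?M" by (rule infsum_cmult_right')
  also have "\<dots> \<le> exp (c*(bL+bR)/24) * B bL bR" using Bb by simp
  finally show ?thesis .
qed



lemma diag:
  assumes "in_class \<alpha> \<epsilon> A B c n" "\<epsilon> > 0" "\<beta> > 2*pi"
  shows "partition_fn c n \<beta> \<beta> \<le> exp (c*\<beta>/12) * (A \<beta> / (1 - exp (- \<epsilon> * (\<beta> - 4*pi^2/\<beta>))))"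
proof -
  have cft: "unitary_modular_cft c n" using assms(1) unfolding in_class_def by auto
  let ?L = "{(h, hb). h + hb \<le> c/12 + \<epsilon>}"
  let ?g = "\<lambda>(h, hb). real (n (h, hb)) * exp (- (h + hb) * \<beta>)"
  define \<beta>' where "\<beta>' = 4*pi^2/\<beta>"
  have bpos: "\<beta> > 0" using assms(3) pi_gt_zero by linarith
  have b'pos: "\<beta>' > 0" unfolding \<beta>'_def using bpos by simp
  have bb: "\<beta>' < \<beta>"
  proof -
    have "(2*pi)*(2*pi) < \<beta> * \<beta>" using assms(3) pi_gt_zero bpos
      by (intro mult_strict_mono) auto
    then have "4*pi^2 < \<beta> * \<beta>" by (simp add: power2_eq_square)
    then show ?thesis unfolding \<beta>'_def using bpos by (simp add: divide_less_eq)
  qed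
  have Ab: "infsum ?g ?L \<le> A \<beta>" using assms unfolding in_class_def by auto
  define Z where "Z = partition_fn c n \<beta> \<beta>"
  define q where "q = exp (- \<epsilon> * (\<beta> - \<beta>'))"
  have q1: "q < 1" unfolding q_def using assms(2) bb by simp
  have ZL: "infsum (tm c n \<beta> \<beta>) ?L \<le> exp (c*\<beta>/12) * A \<beta>"
  proof -
    have "infsum (tm c n \<beta> \<beta>) ?L = infsum (\<lambda>p. exp (c*\<beta>/12) * ?g p) ?L"
    proof (rule infsum_cong)
      fix p :: "real \<times> real"
      obtain h hb where p: "p = (h, hb)" by (cases p)
      have "exp (- (h - c/24) * \<beta> - (hb - c/24) * \<beta>) = exp (c*\<beta>/12) * exp (- (h + hb) * \<beta>)"
        by (simp add: exp_add[symmetric] algebra_simps add_divide_distrib)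
      then show "tm c n \<beta> \<beta> p = exp (c*\<beta>/12) * ?g p" by (simp add: p tm_def)
    qed
    also have "\<dots> = exp (c*\<beta>/12) * infsum ?g ?L" by (rule infsum_cmult_right')
    also have "\<dots> \<le> exp (c*\<beta>/12) * A \<beta>" using Ab by simp
    finally show ?thesis .
  qed
  have ZH: "infsum (tm c n \<beta> \<beta>) (-?L) \<le> q * Z"
  proof -
    have "infsum (tm c n \<beta> \<beta>) (-?L) \<le> infsum (\<lambda>p. q * tm c n \<beta>' \<beta>' p) (-?L)"
    proof (rule infsum_mono)
      show "tm c n \<beta> \<beta> summable_on (-?L)" using tm_summable cft bpos by auto
      show "(\<lambda>p. q * tm c n \<beta>' \<beta>' p) summable_on (-?L)"
        using tm_summable[OF cft b'pos b'pos] summable_on_cmult_right by blast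
      fix p assume pS: "p \<in> -?L"
      obtain h hb where p: "p = (h, hb)" by (cases p)
      have hh: "h + hb - c/12 \<ge> \<epsilon>" using pS p by auto
      have "(h + hb - c/12) * (\<beta> - \<beta>') \<ge> \<epsilon> * (\<beta> - \<beta>')"
        by (rule mult_right_mono) (use hh bb in auto)
      then have "- (h - c/24) * \<beta> - (hb - c/24) * \<beta> \<le> - \<epsilon> * (\<beta> - \<beta>') + (- (h - c/24) * \<beta>' - (hb - c/24) * \<beta>')"
        by (simp add: field_simps)
      then have "exp (- (h - c/24) * \<beta> - (hb - c/24) * \<beta>) \<le> q * exp (- (h - c/24) * \<beta>' - (hb - c/24) * \<beta>')"
        unfolding q_def by (simp add: exp_add[symmetric])
      then have "real (n (h, hb)) * exp (- (h - c/24) * \<beta> - (hb - c/24) * \<beta>) \<le> real (n (h, hb)) * (q * exp (- (h - c/24) * \<beta>' - (hb - c/24) * \<beta>'))"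
        by (rule mult_left_mono) simp
      then show "tm c n \<beta> \<beta> p \<le> q * tm c n \<beta>' \<beta>' p" unfolding p tm_def by (simp add: mult_ac)
    qed
    also have "\<dots> = q * infsum (tm c n \<beta>' \<beta>') (-?L)" by (rule infsum_cmult_right')
    also have "\<dots> \<le> q * infsum (tm c n \<beta>' \<beta>') UNIV"
      using sub_le[OF cft b'pos b'pos] q_def by (simp add: mult_left_mono)
    also have "infsum (tm c n \<beta>' \<beta>') UNIV = Z"
      using cft bpos unfolding Z_def Z_tm[symmetric] \<beta>'_def unitary_modular_cft_def by metis
    finally show ?thesis .
  qed
  have "Z = infsum (tm c n \<beta> \<beta>) ?L + infsum (tm c n \<beta> \<beta>) (-?L)"
    unfolding Z_def Z_tm using split_infsum[OF cft bpos bpos] by blast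
  then have "Z \<le> exp (c*\<beta>/12) * A \<beta> + q * Z" using ZL ZH by linarith
  then have "Z * (1 - q) \<le> exp (c*\<beta>/12) * A \<beta>" by (simp add: algebra_simps)
  then have "Z \<le> exp (c*\<beta>/12) * A \<beta> / (1 - q)" using q1 by (simp add: le_divide_eq)
  then show ?thesis unfolding Z_def q_def \<beta>'_def by simp
qed




definition good :: "real \<Rightarrow> real \<Rightarrow> (real \<Rightarrow> real) \<Rightarrow> (real \<Rightarrow> real \<Rightarrow> real) \<Rightarrow> real \<Rightarrow> real \<Rightarrow> bool" where
  "good \<alpha> \<epsilon> A B p q \<longleftrightarrow> (\<exists>K. \<forall>c n. in_class \<alpha> \<epsilon> A B c n \<longrightarrow> partition_fn c n p q \<le> K * exp (c*(p+q)/24))"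

lemma R0:
  assumes "\<epsilon> > 0" "p > 2*pi" "q > 2*pi"
  shows "good \<alpha> \<epsilon> A B p q"
proof -
  define \<gamma> where "\<gamma> = min p q"
  have g2: "\<gamma> > 2*pi" using assms unfolding \<gamma>_def by auto
  have gpos: "\<gamma> > 0" using g2 pi_gt_zero by linarith
  define K where "K = A \<gamma> / (1 - exp (- \<epsilon> * (\<gamma> - 4*pi^2/\<gamma>)))"
  show ?thesis unfolding good_def
  proof (intro exI allI impI)
    fix c n assume cl: "in_class \<alpha> \<epsilon> A B c n"
    have cft: "unitary_modular_cft c n" using cl unfolding in_class_def by auto
    have "infsum (tm c n p q) UNIV \<le> exp ((1-0)*c*(p-\<gamma>+q-\<gamma>)/24) * infsum (tm c n \<gamma> \<gamma>) UNIV"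
      by (rule shift[OF cft gpos _ gpos]) (use cft in \<open>auto simp: \<gamma>_def unitary_modular_cft_def\<close>)
    also have "\<dots> \<le> exp ((1-0)*c*(p-\<gamma>+q-\<gamma>)/24) * (exp (c*\<gamma>/12) * K)"
      using diag[OF cl assms(1) g2] unfolding K_def Z_tm by (intro mult_left_mono) auto
    also have "\<dots> = K * exp (c*(p+q)/24)"
      by (simp add: exp_add[symmetric] algebra_simps add_divide_distrib diff_divide_distrib)
    finally show "partition_fn c n p q \<le> K * exp (c*(p+q)/24)" unfolding Z_tm .
  qed
qed

lemma step:
  assumes "\<alpha> \<le> 1" "0 < \<beta>1" "\<beta>1 \<le> x" "0 < \<beta>2" "\<beta>2 \<le> b" "x * b > 4*pi^2"
    and G: "good \<alpha> \<epsilon> A B (4*pi^2/\<beta>1) (4*pi^2/\<beta>2)"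
    and ineq: "4*pi^2/\<beta>1 + 4*pi^2/\<beta>2 + (1-\<alpha>)*(x+b-\<beta>1-\<beta>2) \<le> x + b"
  shows "good \<alpha> \<epsilon> A B x b"
proof -
  obtain K where K: "\<And>c n. in_class \<alpha> \<epsilon> A B c n \<Longrightarrow> partition_fn c n (4*pi^2/\<beta>1) (4*pi^2/\<beta>2) \<le> K * exp (c*(4*pi^2/\<beta>1+4*pi^2/\<beta>2)/24)"
    using G unfolding good_def by blast
  have xpos: "x > 0" and bpos: "b > 0" using assms by auto
  show ?thesis unfolding good_def
  proof (intro exI allI impI)
    fix c n assume cl: "in_class \<alpha> \<epsilon> A B c n"
    have cft: "unitary_modular_cft c n" using cl unfolding in_class_def by auto
    have c0: "c \<ge> 0" using cft unfolding unitary_modular_cft_def by auto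
    let ?M = "{(h, hb). min h hb \<le> \<alpha> * c / 24}"
    let ?E = "exp ((1-\<alpha>)*c*(x-\<beta>1+b-\<beta>2)/24)"
    let ?F = "exp (c*(4*pi^2/\<beta>1+4*pi^2/\<beta>2)/24)"
    have Z1: "partition_fn c n x b = infsum (tm c n x b) ?M + infsum (tm c n x b) (-?M)"
      unfolding Z_tm by (rule split_infsum[OF cft xpos bpos])
    have ZM: "infsum (tm c n x b) ?M \<le> exp (c*(x+b)/24) * B x b"
      by (rule Mbound[OF cl xpos bpos assms(6)])
    have "infsum (tm c n x b) (-?M) \<le> ?E * infsum (tm c n \<beta>1 \<beta>2) (-?M)"
      by (rule shift[OF cft assms(2,3,4,5,1)]) auto
    also have "\<dots> \<le> ?E * partition_fn c n \<beta>1 \<beta>2"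
      unfolding Z_tm by (intro mult_left_mono sub_le[OF cft assms(2,4)]) auto
    also have "partition_fn c n \<beta>1 \<beta>2 = partition_fn c n (4*pi^2/\<beta>1) (4*pi^2/\<beta>2)"
      using cft assms(2,4) unfolding unitary_modular_cft_def by blast
    also have "?E * \<dots> \<le> ?E * (max K 0 * ?F)"
      using K[OF cl] by (intro mult_left_mono) (auto intro: order_trans mult_right_mono)
    also have "\<dots> = max K 0 * exp ((1-\<alpha>)*c*(x-\<beta>1+b-\<beta>2)/24 + c*(4*pi^2/\<beta>1+4*pi^2/\<beta>2)/24)"
      by (simp add: exp_add)
    also have "\<dots> \<le> max K 0 * exp (c*(x+b)/24)"
    proof (intro mult_left_mono)
      have "c * ((1-\<alpha>)*(x-\<beta>1+b-\<beta>2) + (4*pi^2/\<beta>1+4*pi^2/\<beta>2)) \<le> c * (x+b)"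
        using ineq c0 by (intro mult_left_mono) (auto simp: add.commute add.left_commute diff_add_eq add_diff_eq)
      then have "c * ((1-\<alpha>)*(x-\<beta>1+b-\<beta>2) + (4*pi^2/\<beta>1+4*pi^2/\<beta>2)) / 24 \<le> c * (x+b) / 24"
        by (rule divide_right_mono) simp
      moreover have "(1-\<alpha>)*c*(x-\<beta>1+b-\<beta>2)/24 + c*(4*pi^2/\<beta>1+4*pi^2/\<beta>2)/24 = c * ((1-\<alpha>)*(x-\<beta>1+b-\<beta>2) + (4*pi^2/\<beta>1+4*pi^2/\<beta>2)) / 24"
        by (simp add: distrib_left add_divide_distrib)
      ultimately show "exp ((1-\<alpha>)*c*(x-\<beta>1+b-\<beta>2)/24 + c*(4*pi^2/\<beta>1+4*pi^2/\<beta>2)/24) \<le> exp (c*(x+b)/24)"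
        by simp
    qed auto
    finally have ZN: "infsum (tm c n x b) (-?M) \<le> max K 0 * exp (c*(x+b)/24)" .
    show "partition_fn c n x b \<le> (B x b + max K 0) * exp (c*(x+b)/24)"
      using Z1 ZM ZN by (simp add: algebra_simps)
  qed
qed




definition MM :: "real \<Rightarrow> real \<Rightarrow> real \<Rightarrow> real" where
  "MM \<alpha> x b = (1-\<alpha>)*(x - 4*pi^2/x) + \<alpha>*(x+b-4*pi)"

lemma inv_bound:
  assumes "0 < t" "t \<le> pi"
  shows "4*pi^2/(2*pi - t) \<le> 2*pi + 2*t"
proof -
  have p: "2*pi - t > 0" using assms pi_gt_zero by linarith
  have "4*pi^2 \<le> (2*pi + 2*t)*(2*pi - t)"
  proof -
    have "(2*pi + 2*t)*(2*pi - t) = 4*pi^2 + 2*t*(pi - t)" by (simp add: algebra_simps power2_eq_square)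
    moreover have "2*t*(pi-t) \<ge> 0" using assms by simp
    ultimately show ?thesis by linarith
  qed
  then show ?thesis using p by (simp add: divide_le_eq)
qed

lemma inv_gt:
  assumes "0 < y" "y < 2*pi"
  shows "4*pi^2/y > 2*pi"
proof -
  have "2*pi*y < 2*pi*(2*pi)" using assms pi_gt_zero by simp
  then have "2*pi*y < 4*pi^2" by (simp add: power2_eq_square)
  then show ?thesis using assms by (simp add: less_divide_eq)
qed

lemma big_other:
  assumes "0 < x" "x \<le> 2*pi" "x*b > 4*pi^2"
  shows "b > 2*pi"
proof (rule ccontr)
  assume "\<not> b > 2*pi"
  then have "b \<le> 2*pi" by simp
  moreover have "b > 0"
  proof (rule ccontr)
    assume "\<not> b > 0"
    then have "x*b \<le> 0" using assms(1) by (simp add: mult_nonneg_nonpos)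
    moreover have "4*pi^2 > (0::real)" by simp
    ultimately show False using assms(3) by linarith
  qed
  ultimately have "x*b \<le> 2*pi*(2*pi)" using assms by (intro mult_mono) auto
  then show False using assms by (simp add: power2_eq_square)
qed

lemma convex_max:
  fixes a y d k :: real
  assumes "0 < a" "a \<le> y" "y \<le> d"
  shows "y + k/y \<le> max (a + k/a) (d + k/d)"
proof (cases "k \<le> 0")
  case True
  have "k/y \<le> k/d"
    using True assms by (intro divide_left_mono_neg) auto
  then show ?thesis using assms by auto
next
  case False
  have ypos: "y > 0" using assms by linarith
  have dpos: "d > 0" using assms by linarith
  have e1: "(y + k/y) - (a + k/a) = (y - a) * (1 - k/(a*y))"
    using ypos assms(1) by (simp add: field_simps)
  have e2: "(y + k/y) - (d + k/d) = (d - y) * (k/(d*y) - 1)"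
    using ypos dpos by (simp add: field_simps)
  show ?thesis
  proof (rule ccontr)
    assume "\<not> ?thesis"
    then have g1: "(y - a) * (1 - k/(a*y)) > 0" and g2: "(d - y) * (k/(d*y) - 1) > 0"
      using e1 e2 by auto
    from g1 have "1 - k/(a*y) > 0" using assms by (simp add: zero_less_mult_iff)
    then have "k < a*y" using assms ypos by (simp add: field_simps)
    from g2 have "k/(d*y) - 1 > 0" using assms by (simp add: zero_less_mult_iff)
    then have "k > d*y" using dpos ypos by (simp add: field_simps)
    have "a*y \<le> d*y" using assms ypos by (intro mult_right_mono) auto
    then show False using \<open>k < a*y\<close> \<open>k > d*y\<close> by linarith
  qed
qed




lemma terminal:
  fixes G :: "real \<Rightarrow> real \<Rightarrow> bool"
  assumes al: "0 < \<alpha>" "\<alpha> \<le> 1"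
    and R0: "\<And>p q. p > 2*pi \<Longrightarrow> q > 2*pi \<Longrightarrow> G p q"
    and St: "\<And>x b \<beta>1 \<beta>2. 0 < \<beta>1 \<Longrightarrow> \<beta>1 \<le> x \<Longrightarrow> 0 < \<beta>2 \<Longrightarrow> \<beta>2 \<le> b \<Longrightarrow> x*b > 4*pi^2 \<Longrightarrow>
        G (4*pi^2/\<beta>1) (4*pi^2/\<beta>2) \<Longrightarrow> 4*pi^2/\<beta>1 + 4*pi^2/\<beta>2 + (1-\<alpha>)*(x+b-\<beta>1-\<beta>2) \<le> x+b \<Longrightarrow> G x b"
    and x: "0 < x" "x \<le> 2*pi" "x*b > 4*pi^2"
    and m: "\<alpha>*(4*pi^2/x - 2*pi) < MM \<alpha> x b"
  shows "G x b \<and> G b x"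
proof -
  have b2: "b > 2*pi" using big_other x by blast
  have bx: "b*x > 4*pi^2" using x by (simp add: mult.commute)
  show ?thesis
  proof (cases "x < 2*pi")
    case True
    define Gap where "Gap = x - 4*pi^2/x + \<alpha>*b - 2*pi*\<alpha>"
    have "MM \<alpha> x b - \<alpha>*(4*pi^2/x - 2*pi) = Gap"
      unfolding MM_def Gap_def by (simp add: algebra_simps add_divide_distrib[symmetric])
    then have gap: "Gap > 0" using m by linarith
    define t where "t = min pi (Gap/3)"
    have t: "0 < t" "t \<le> pi" "3*t \<le> Gap" using gap pi_gt_zero unfolding t_def by auto
    define \<beta> where "\<beta> = 2*pi - t"
    have bp: "0 < \<beta>" "\<beta> < 2*pi" "\<beta> \<le> b" using t b2 pi_gt_zero unfolding \<beta>_def by auto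
    have ib: "4*pi^2/\<beta> \<le> 2*pi + 2*t" unfolding \<beta>_def by (rule inv_bound[OF t(1,2)])
    have Gu: "4*pi^2/x > 2*pi" by (rule inv_gt[OF x(1) True])
    have Gv: "4*pi^2/\<beta> > 2*pi" by (rule inv_gt[OF bp(1,2)])
    have key: "4*pi^2/x + 4*pi^2/\<beta> + (1-\<alpha>)*(b-\<beta>) \<le> x + b"
    proof -
      have "(1-\<alpha>)*(b-\<beta>) = b - \<alpha>*b - 2*pi + 2*pi*\<alpha> + t - \<alpha>*t"
        unfolding \<beta>_def by (simp add: algebra_simps)
      moreover have "\<alpha>*t \<ge> 0" using al t by simp
      ultimately show ?thesis using ib t(3) unfolding Gap_def by linarith
    qed
    have "G x b"
      by (rule St[OF x(1) order_refl bp(1) bp(3) x(3) R0[OF Gu Gv]]) (use key in \<open>simp add: algebra_simps\<close>)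
    moreover have "G b x"
      by (rule St[OF bp(1) bp(3) x(1) order_refl bx R0[OF Gv Gu]]) (use key in \<open>simp add: algebra_simps\<close>)
    ultimately show ?thesis by blast
  next
    case False
    then have x2: "x = 2*pi" using x by simp
    define t where "t = min pi (\<alpha>*(b-2*pi)/6)"
    have t: "0 < t" "t \<le> pi" "6*t \<le> \<alpha>*(b-2*pi)" using b2 al pi_gt_zero unfolding t_def by auto
    define \<beta> where "\<beta> = 2*pi - t"
    have bp: "0 < \<beta>" "\<beta> < 2*pi" "\<beta> \<le> b" "\<beta> \<le> x" using t b2 pi_gt_zero x2 unfolding \<beta>_def by auto
    have ib: "4*pi^2/\<beta> \<le> 2*pi + 2*t" unfolding \<beta>_def by (rule inv_bound[OF t(1,2)])
    have Gv: "4*pi^2/\<beta> > 2*pi" by (rule inv_gt[OF bp(1,2)])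
    have key: "4*pi^2/\<beta> + 4*pi^2/\<beta> + (1-\<alpha>)*(x+b-\<beta>-\<beta>) \<le> x + b"
    proof -
      have "(1-\<alpha>)*(x+b-\<beta>-\<beta>) = b - \<alpha>*b - 2*pi + 2*pi*\<alpha> + 2*t - 2*\<alpha>*t"
        unfolding \<beta>_def x2 by (simp add: algebra_simps)
      moreover have "\<alpha>*t \<ge> 0" using al t by simp
      moreover have "\<alpha>*(b-2*pi) = \<alpha>*b - 2*pi*\<alpha>" by (simp add: algebra_simps)
      ultimately show ?thesis using ib t(3) x2 by linarith
    qed
    have "G x b"
      by (rule St[OF bp(1) bp(4) bp(1) bp(3) x(3) R0[OF Gv Gv] key])
    moreover have "G b x"
      by (rule St[OF bp(1) bp(3) bp(1) bp(4) bx R0[OF Gv Gv]]) (use key in \<open>simp add: algebra_simps\<close>)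
    ultimately show ?thesis by blast
  qed
qed




definition HH :: "real \<Rightarrow> real \<Rightarrow> real" where
  "HH \<alpha> y = y + ((2*\<alpha>-1)*(4*pi^2))/y - 4*pi*\<alpha>"

lemma chain:
  fixes G :: "real \<Rightarrow> real \<Rightarrow> bool"
  assumes al: "0 < \<alpha>" "\<alpha> \<le> 1"
    and R0: "\<And>p q. p > 2*pi \<Longrightarrow> q > 2*pi \<Longrightarrow> G p q"
    and St: "\<And>x b \<beta>1 \<beta>2. 0 < \<beta>1 \<Longrightarrow> \<beta>1 \<le> x \<Longrightarrow> 0 < \<beta>2 \<Longrightarrow> \<beta>2 \<le> b \<Longrightarrow> x*b > 4*pi^2 \<Longrightarrow>
        G (4*pi^2/\<beta>1) (4*pi^2/\<beta>2) \<Longrightarrow> 4*pi^2/\<beta>1 + 4*pi^2/\<beta>2 + (1-\<alpha>)*(x+b-\<beta>1-\<beta>2) \<le> x+b \<Longrightarrow> G x b"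
    and xz: "0 < xz" "xz \<le> 2*pi" and mz: "0 < mz" and h0: "HH \<alpha> xz < mz"
  defines "xs \<equiv> 4*pi^2*\<alpha>/(2*pi*\<alpha>+mz)"
  defines "\<delta> \<equiv> mz - max (HH \<alpha> xz) (HH \<alpha> xs)"
  defines "\<eta> \<equiv> \<delta>/(1 + 4*pi^2/xz^2)"
  shows "xz \<le> x \<Longrightarrow> x \<le> 2*pi \<Longrightarrow> x*b > 4*pi^2 \<Longrightarrow> MM \<alpha> x b = mz \<Longrightarrow> G x b \<and> G b x"
proof -
  have den: "2*pi*\<alpha>+mz > 0" using al mz pi_gt_zero by (simp add: add_pos_pos)
  have xspos: "xs > 0" unfolding xs_def using al den by simp
  have xs2: "xs < 2*pi"
  proof -
    have "4*pi^2*\<alpha> < 2*pi*(2*pi*\<alpha>+mz)" using mz pi_gt_zero by (simp add: algebra_simps power2_eq_square)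
    then show ?thesis unfolding xs_def using den by (simp add: divide_less_eq)
  qed
  have iv: "4*pi^2/xs = (2*pi*\<alpha>+mz)/\<alpha>" unfolding xs_def using al den by simp
  have hxs: "HH \<alpha> xs < mz"
  proof -
    have "HH \<alpha> xs = xs + (2*\<alpha>-1)*(4*pi^2/xs) - 4*pi*\<alpha>" unfolding HH_def by simp
    also have "\<dots> = xs + (2*\<alpha>-1)*((2*pi*\<alpha>+mz)/\<alpha>) - 4*pi*\<alpha>" by (simp add: iv)
    also have "\<dots> = xs - 2*pi + 2*mz - mz/\<alpha>" using al by (simp add: field_simps)
    finally have e: "HH \<alpha> xs = xs - 2*pi + 2*mz - mz/\<alpha>" .
    have "mz/\<alpha> \<ge> mz" using al mz by (simp add: le_divide_eq)
    then show ?thesis using e xs2 by linarith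
  qed
  have dpos: "\<delta> > 0" unfolding \<delta>_def using h0 hxs by simp
  define \<Lambda> where "\<Lambda> = 1 + 4*pi^2/xz^2"
  have Lpos: "\<Lambda> > 0" unfolding \<Lambda>_def by (simp add: add_pos_nonneg)
  have etapos: "\<eta> > 0" unfolding \<eta>_def using dpos Lpos \<Lambda>_def by simp
  have hmax: "HH \<alpha> y \<le> max (HH \<alpha> xz) (HH \<alpha> xs)" if "xz \<le> y" "y \<le> xs" for y
    using convex_max[OF xz(1) that, of "(2*\<alpha>-1)*(4*pi^2)"] unfolding HH_def by (simp add: max_diff_distrib_left)
  have main: "xz \<le> x \<Longrightarrow> x \<le> 2*pi \<Longrightarrow> x*b > 4*pi^2 \<Longrightarrow> MM \<alpha> x b = mz \<Longrightarrow> xs < x + real n * \<eta> \<Longrightarrow> G x b \<and> G b x" for n :: nat and x b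
  proof (induction n arbitrary: x b)
    case 0
    have xpos: "x > 0" using 0 xz by linarith
    have "xs < x" using 0 by simp
    then have "4*pi^2*\<alpha> < x*(2*pi*\<alpha>+mz)" unfolding xs_def using den by (simp add: divide_less_eq mult.commute)
    then have "4*pi^2*\<alpha>/x < 2*pi*\<alpha>+mz" using xpos by (simp add: divide_less_eq mult.commute)
    then have "\<alpha>*(4*pi^2/x - 2*pi) < MM \<alpha> x b" using 0 by (simp add: algebra_simps)
    then have mm: "\<alpha>*(4*pi^2/x - 2*pi) < MM \<alpha> x b" .
    show ?case
      by (rule terminal[where G=G and \<alpha>=\<alpha>]) (fact al(1) al(2) R0 St xpos 0(2) 0(3) mm)+
  next
    case (Suc n)
    have xpos: "x > 0" using Suc xz by linarith
    show ?case
    proof (cases "xs < x")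
      case True
      then have "4*pi^2*\<alpha> < x*(2*pi*\<alpha>+mz)" unfolding xs_def using den by (simp add: divide_less_eq mult.commute)
      then have "4*pi^2*\<alpha>/x < 2*pi*\<alpha>+mz" using xpos by (simp add: divide_less_eq mult.commute)
      then have "\<alpha>*(4*pi^2/x - 2*pi) < MM \<alpha> x b" using Suc by (simp add: algebra_simps)
      then have mm: "\<alpha>*(4*pi^2/x - 2*pi) < MM \<alpha> x b" .
      show ?thesis
        by (rule terminal[where G=G and \<alpha>=\<alpha>]) (fact al(1) al(2) R0 St xpos Suc(3) Suc(4) mm)+
    next
      case False
      then have xxs: "x \<le> xs" by simp
      then have "x*(2*pi*\<alpha>+mz) \<le> 4*pi^2*\<alpha>" unfolding xs_def using den by (simp add: le_divide_eq mult.commute)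
      then have "2*pi*\<alpha>+mz \<le> 4*pi^2*\<alpha>/x" using xpos by (simp add: le_divide_eq mult.commute)
      then have nt: "mz \<le> \<alpha>*(4*pi^2/x - 2*pi)" by (simp add: algebra_simps)
      have b2: "b > 2*pi" using big_other xpos Suc(3,4) by blast
      have bpos: "b > 0" using b2 pi_gt_zero by linarith
      define u where "u = 4*pi^2/x"
      have upos: "u > 0" unfolding u_def using xpos by simp
      have ub: "u < b" unfolding u_def using Suc(4) xpos by (simp add: divide_less_eq mult.commute)
      define f where "f = (\<lambda>v. MM \<alpha> v u)"
      define lo where "lo = max x (4*pi^2/b)"
      have lopos: "lo > 0" unfolding lo_def using xpos by simp
      have lo2: "lo \<le> 2*pi"
      proof -
        have "2*pi*(2*pi) < 2*pi*b" using b2 pi_gt_zero by (intro mult_strict_left_mono) auto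
        then have "4*pi^2 < 2*pi*b" by (simp add: power2_eq_square)
        then have "4*pi^2/b < 2*pi" using bpos by (simp add: divide_less_eq)
        then show ?thesis unfolding lo_def using xxs xs2 by simp
      qed
      have fx: "f x = HH \<alpha> x" unfolding f_def MM_def HH_def u_def using xpos by (simp add: field_simps)
      have hx: "HH \<alpha> x < mz"
      proof -
        have "mz - HH \<alpha> x = \<alpha>*(b - u)" using Suc(5) unfolding MM_def HH_def u_def using xpos
          by (simp add: field_simps)
        moreover have "\<alpha>*(b-u) > 0" using al ub by simp
        ultimately show ?thesis by linarith
      qed
      have fb: "f (4*pi^2/b) < mz"
      proof -
        have e1: "f (4*pi^2/b) = (1-\<alpha>)*(4*pi^2/b - b) + \<alpha>*(4*pi^2/b + u - 4*pi)"
          using bpos by (simp add: f_def MM_def)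
        have e2: "mz = (1-\<alpha>)*(x - u) + \<alpha>*(x + b - 4*pi)" using Suc(5) unfolding MM_def u_def by simp
        define w where "w = 4*pi^2/b"
        have "mz - f (4*pi^2/b) = ((1-\<alpha>)*(x - u) + \<alpha>*(x + b - 4*pi)) - ((1-\<alpha>)*(w - b) + \<alpha>*(w + u - 4*pi))"
          using e1 e2 unfolding w_def by simp
        also have "\<dots> = x + b - u - w" by (simp add: algebra_simps)
        finally have "mz - f (4*pi^2/b) = x + b - u - 4*pi^2/b" unfolding w_def .
        moreover have "4*pi^2/b < x" using Suc(4) bpos by (simp add: divide_less_eq mult.commute)
        ultimately show ?thesis using ub by linarith
      qed
      have flo: "f lo \<le> mz" unfolding lo_def using fx hx fb by (cases "x \<le> 4*pi^2/b") (auto simp: max_def)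
      have p22: "4*pi^2/(2*pi) = 2*pi" by (simp add: power2_eq_square)
      have "f (2*pi) = (1-\<alpha>)*(2*pi - 2*pi) + \<alpha>*(2*pi + u - 4*pi)"
        unfolding f_def MM_def p22 by simp
      also have "\<dots> = \<alpha>*(4*pi^2/x - 2*pi)" unfolding u_def by (simp add: algebra_simps)
      finally have f2: "f (2*pi) \<ge> mz" using nt by simp
      have cont: "continuous_on {lo..2*pi} f"
        unfolding f_def MM_def using lopos by (intro continuous_intros) auto
      obtain v where v: "lo \<le> v" "v \<le> 2*pi" "f v = mz"
        using IVT'[of f lo mz "2*pi", OF flo f2 lo2 cont] by blast
      have xv: "x \<le> v" and bv: "4*pi^2/b \<le> v" using v(1) unfolding lo_def by auto
      have vpos: "v > 0" using xpos xv by linarith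
      define W where "W = 4*pi^2/(v * x)"
      define kk where "kk = (1-\<alpha>)*(1 + W) + \<alpha>"
      have fdiff: "f v - f x = (v - x) * kk"
        unfolding f_def MM_def kk_def W_def using xpos vpos by (simp add: field_simps)
      have kpos: "kk > 0" unfolding kk_def W_def using al xpos vpos
        by (simp add: add_nonneg_pos mult_nonneg_nonneg add_nonneg_nonneg)
      have kL: "kk \<le> \<Lambda>"
      proof -
        have "xz*xz \<le> v * x" using Suc(2) xv xz by (intro mult_mono) auto
        then have "4*pi^2/(v * x) \<le> 4*pi^2/(xz*xz)"
          by (rule divide_left_mono) (use xz xpos vpos in auto)
        then have w: "W \<le> 4*pi^2/xz^2" unfolding W_def by (simp add: power2_eq_square)
        have "\<alpha> * W \<ge> 0" using al xpos vpos unfolding W_def by simp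
        then have "kk \<le> 1 + W" unfolding kk_def by (simp add: algebra_simps)
        then show ?thesis unfolding \<Lambda>_def using w by linarith
      qed
      have dle: "\<delta> \<le> (v - x) * kk"
        using fdiff v(3) fx hmax[OF Suc(2) xxs] unfolding \<delta>_def by linarith
      have "\<eta> \<le> \<delta>/kk" unfolding \<eta>_def \<Lambda>_def[symmetric]
        using dpos kpos kL by (intro divide_left_mono) auto
      also have "\<delta>/kk \<le> v - x" using dle kpos by (simp add: divide_le_eq)
      finally have prog: "x + \<eta> \<le> v" by simp
      have vx: "x < v" using prog etapos by linarith
      have vu: "v * u > 4*pi^2"
      proof -
        have "4*pi^2*x < 4*pi^2 * v" using vx by simp
        then have "4*pi^2 < 4*pi^2 * v/x" using xpos by (simp add: less_divide_eq)
        then show ?thesis unfolding u_def by (simp add: mult.commute)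
      qed
      have IH: "G v u \<and> G u v"
      proof (rule Suc.IH)
        show "xz \<le> v" using Suc(2) xv by linarith
        show "v \<le> 2*pi" by (rule v(2))
        show "v * u > 4*pi^2" by (rule vu)
        show "MM \<alpha> v u = mz" using v(3) unfolding f_def .
        show "xs < v + real n * \<eta>" using Suc(6) prog by (simp add: algebra_simps)
      qed
      have inv: "4*pi^2/(4*pi^2/v) = v" by simp
      have b2v: "4*pi^2/v \<le> b" using bv vpos bpos by (simp add: divide_le_eq mult.commute)
      have b2vpos: "4*pi^2/v > 0" using vpos by simp
      have ident: "x + b - (u + v + (1-\<alpha>)*(b - 4*pi^2/v)) = MM \<alpha> x b - MM \<alpha> v u"
        unfolding MM_def u_def using xpos vpos by (simp add: field_simps)
      then have id0: "u + v + (1-\<alpha>)*(b - 4*pi^2/v) = x + b" using Suc(5) v(3) unfolding f_def by simp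
      have bx: "b*x > 4*pi^2" using Suc(4) by (simp add: mult.commute)
      have "G x b"
        by (rule St[OF xpos order_refl b2vpos b2v Suc(4)]) (use IH id0 inv u_def in auto)
      moreover have "G b x"
        by (rule St[OF b2vpos b2v xpos order_refl bx]) (use IH id0 inv u_def in \<open>auto simp: algebra_simps\<close>)
      ultimately show ?thesis by blast
    qed
  qed
  obtain n where n: "xs - x < real n * \<eta>" using ex_less_of_nat_mult[OF etapos] by blast
  then have nn: "xs < x + real n * \<eta>" by linarith
  show "xz \<le> x \<Longrightarrow> x \<le> 2*pi \<Longrightarrow> x*b > 4*pi^2 \<Longrightarrow> MM \<alpha> x b = mz \<Longrightarrow> G x b \<and> G b x"
    using main nn by blast
qed




lemma root_pos:
  assumes al: "0 < \<alpha>" "\<alpha> \<le> 1" and x: "x > 0"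
    and r: "x > (\<alpha>*(4*pi-\<beta>) + sqrt (\<alpha>^2*(4*pi-\<beta>)^2 + 16*pi^2*(1-\<alpha>)))/2"
  shows "MM \<alpha> x \<beta> > 0"
proof -
  define a where "a = \<alpha>*(4*pi-\<beta>)"
  define DD where "DD = a^2 + 16*pi^2*(1-\<alpha>)"
  have D0: "DD \<ge> 0" unfolding DD_def using al by (intro add_nonneg_nonneg mult_nonneg_nonneg) auto
  define s where "s = sqrt DD"
  have s0: "s \<ge> 0" unfolding s_def using D0 by simp
  have s2: "s^2 = DD" unfolding s_def by (rule real_sqrt_pow2[OF D0])
  have e: "sqrt (\<alpha>^2*(4*pi-\<beta>)^2 + 16*pi^2*(1-\<alpha>)) = s" unfolding s_def DD_def a_def by (simp add: power_mult_distrib)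
  have r': "x > (a+s)/2" using r e by (simp add: a_def)
  then have "a + s < x*2" by (simp add: divide_less_eq)
  then have gt: "2*x - a > s" by linarith
  have "s^2 < (2*x - a)^2" using gt s0 by (intro power_strict_mono) auto
  then have q: "x^2 - a*x - 4*pi^2*(1-\<alpha>) > 0" using s2 unfolding DD_def by (simp add: power2_eq_square algebra_simps)
  have "MM \<alpha> x \<beta> = (x^2 - a*x - 4*pi^2*(1-\<alpha>))/x"
    unfolding MM_def a_def using x by (simp add: field_simps power2_eq_square)
  then show ?thesis using q x by simp
qed

lemma start:
  fixes G :: "real \<Rightarrow> real \<Rightarrow> bool"
  assumes al: "0 < \<alpha>" "\<alpha> \<le> 1"
    and R0: "\<And>p q. p > 2*pi \<Longrightarrow> q > 2*pi \<Longrightarrow> G p q"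
    and St: "\<And>x b \<beta>1 \<beta>2. 0 < \<beta>1 \<Longrightarrow> \<beta>1 \<le> x \<Longrightarrow> 0 < \<beta>2 \<Longrightarrow> \<beta>2 \<le> b \<Longrightarrow> x*b > 4*pi^2 \<Longrightarrow>
        G (4*pi^2/\<beta>1) (4*pi^2/\<beta>2) \<Longrightarrow> 4*pi^2/\<beta>1 + 4*pi^2/\<beta>2 + (1-\<alpha>)*(x+b-\<beta>1-\<beta>2) \<le> x+b \<Longrightarrow> G x b"
    and x0: "0 < x0" "x0 \<le> 2*pi" "x0*b > 4*pi^2" and m: "MM \<alpha> x0 b > 0"
  shows "G x0 b \<and> G b x0"
proof -
  have ub: "4*pi^2/x0 < b" using x0 by (simp add: divide_less_eq mult.commute)
  have "MM \<alpha> x0 b - HH \<alpha> x0 = \<alpha>*(b - 4*pi^2/x0)" unfolding MM_def HH_def using x0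
    by (simp add: field_simps)
  moreover have "\<alpha>*(b - 4*pi^2/x0) > 0" using al ub by simp
  ultimately have h0: "HH \<alpha> x0 < MM \<alpha> x0 b" by linarith
  show ?thesis
    by (rule chain[where G=G and \<alpha>=\<alpha> and xz=x0 and mz="MM \<alpha> x0 b"])
       (fact al(1) al(2) R0 St x0(1) x0(2) x0(3) m h0 order_refl refl)+
qed

lemma Dgood:
  fixes G :: "real \<Rightarrow> real \<Rightarrow> bool"
  assumes al: "0 < \<alpha>" "\<alpha> \<le> 1"
    and R0: "\<And>p q. p > 2*pi \<Longrightarrow> q > 2*pi \<Longrightarrow> G p q"
    and St: "\<And>x b \<beta>1 \<beta>2. 0 < \<beta>1 \<Longrightarrow> \<beta>1 \<le> x \<Longrightarrow> 0 < \<beta>2 \<Longrightarrow> \<beta>2 \<le> b \<Longrightarrow> x*b > 4*pi^2 \<Longrightarrow>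
        G (4*pi^2/\<beta>1) (4*pi^2/\<beta>2) \<Longrightarrow> 4*pi^2/\<beta>1 + 4*pi^2/\<beta>2 + (1-\<alpha>)*(x+b-\<beta>1-\<beta>2) \<le> x+b \<Longrightarrow> G x b"
    and D: "(bL, bR) \<in> D_alpha \<alpha>"
  shows "G bL bR \<and> bL > 0 \<and> bR > 0"
proof -
  have one: "G x b \<and> G b x \<and> x > 0" if b2: "b > 2*pi" and xp: "x > phi_alpha \<alpha> b" for x b
  proof -
    have bpos: "b > 0" using b2 pi_gt_zero by linarith
    have x1: "x > 4*pi^2/b" using xp unfolding phi_alpha_def by simp
    have x2: "x > (\<alpha>*(4*pi-b) + sqrt (\<alpha>^2*(4*pi-b)^2 + 16*pi^2*(1-\<alpha>)))/2"
      using xp unfolding phi_alpha_def by simp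
    have xpos: "x > 0" using x1 bpos by (smt (verit) divide_pos_pos zero_less_power pi_gt_zero)
    have xb: "x*b > 4*pi^2" using x1 bpos by (simp add: divide_less_eq)
    have bx: "b*x > 4*pi^2" using xb by (simp add: mult.commute)
    show ?thesis
    proof (cases "x > 2*pi")
      case True
      then show ?thesis using R0 b2 xpos by blast
    next
      case False
      have m: "MM \<alpha> x b > 0" by (rule root_pos[OF al xpos x2])
      have x2pi: "x \<le> 2*pi" using False by simp
      have "G x b \<and> G b x"
        by (rule start[where G=G and \<alpha>=\<alpha>]) (fact al(1) al(2) R0 St xpos x2pi xb m)+
      then show ?thesis using xpos by blast
    qed
  qed
  from D have "(bR > 2*pi \<and> bL > phi_alpha \<alpha> bR) \<or> (bL > 2*pi \<and> bR > phi_alpha \<alpha> bL)"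
    unfolding D_alpha_def by auto
  then show ?thesis
  proof
    assume h: "bR > 2*pi \<and> bL > phi_alpha \<alpha> bR"
    moreover have "bR > 0" using h pi_gt_zero by linarith
    ultimately show ?thesis using one[of bR bL] by auto
  next
    assume h: "bL > 2*pi \<and> bR > phi_alpha \<alpha> bL"
    moreover have "bL > 0" using h pi_gt_zero by linarith
    ultimately show ?thesis using one[of bL bR] by auto
  qed
qed




lemma logb:
  fixes Z E K :: real
  assumes "Z \<ge> exp E" "Z \<le> K * exp E"
  shows "\<bar>ln Z - E\<bar> \<le> ln (max K 1)"
proof -
  have Zp: "Z > 0" using assms(1) by (smt (verit) exp_gt_zero)
  have Kp: "K > 0" using assms Zp by (smt (verit) exp_gt_zero mult_nonpos_nonneg)
  have l1: "E \<le> ln Z" using assms(1) Zp by (metis exp_gt_zero ln_exp ln_le_cancel_iff)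
  have "ln Z \<le> ln (K * exp E)" using assms(2) Zp Kp by simp
  also have "\<dots> = ln K + E" using Kp by (simp add: ln_mult)
  finally have l2: "ln Z \<le> ln K + E" .
  have "ln K \<le> ln (max K 1)" using Kp by simp
  moreover have "ln (max K 1) \<ge> 0" by simp
  ultimately show ?thesis using l1 l2 by linarith
qed

theorem corollary1:
  fixes \<alpha> \<epsilon> :: real and A :: "real \<Rightarrow> real" and B :: "real \<Rightarrow> real \<Rightarrow> real"
  assumes "0 < \<alpha>" and "\<alpha> \<le> 1" and "\<epsilon> > 0"
    and "\<And>\<beta>. \<beta> > 2*pi \<Longrightarrow> A \<beta> \<ge> 0"
    and "\<And>bL bR. bL > 0 \<Longrightarrow> bR > 0 \<Longrightarrow> bL * bR > 4*pi^2 \<Longrightarrow> B bL bR \<ge> 0"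
  shows "(\<forall>(bL, bR)\<in>D_alpha \<alpha>. \<exists>K::real. \<forall>c n. in_class \<alpha> \<epsilon> A B c n \<longrightarrow>
            \<bar>ln (partition_fn c n bL bR) - c/24 * (bL + bR)\<bar> \<le> K)
       \<and> (\<forall>bL bR. bL > 0 \<longrightarrow> bR > 0 \<longrightarrow> (4*pi^2/bL, 4*pi^2/bR) \<in> D_alpha \<alpha> \<longrightarrow>
            (\<exists>K::real. \<forall>c n. in_class \<alpha> \<epsilon> A B c n \<longrightarrow>
            \<bar>ln (partition_fn c n bL bR) - pi^2 * c / 6 * (1/bL + 1/bR)\<bar> \<le> K))"
proof -
  have R0': "\<And>p q. p > 2*pi \<Longrightarrow> q > 2*pi \<Longrightarrow> good \<alpha> \<epsilon> A B p q"
    using R0[OF assms(3)] by blast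
  have St': "\<And>x b \<beta>1 \<beta>2. 0 < \<beta>1 \<Longrightarrow> \<beta>1 \<le> x \<Longrightarrow> 0 < \<beta>2 \<Longrightarrow> \<beta>2 \<le> b \<Longrightarrow> x*b > 4*pi^2 \<Longrightarrow>
        good \<alpha> \<epsilon> A B (4*pi^2/\<beta>1) (4*pi^2/\<beta>2) \<Longrightarrow> 4*pi^2/\<beta>1 + 4*pi^2/\<beta>2 + (1-\<alpha>)*(x+b-\<beta>1-\<beta>2) \<le> x+b \<Longrightarrow> good \<alpha> \<epsilon> A B x b"
    using step[OF assms(2)] by blast
  have Dg: "good \<alpha> \<epsilon> A B bL bR \<and> bL > 0 \<and> bR > 0" if "(bL, bR) \<in> D_alpha \<alpha>" for bL bR
    by (rule Dgood[where G="good \<alpha> \<epsilon> A B" and \<alpha>=\<alpha>]) (fact assms(1) assms(2) R0' St' that)+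
  show ?thesis
  proof (intro conjI allI impI ballI)
    fix p assume pD: "p \<in> D_alpha \<alpha>"
    obtain bL bR where p: "p = (bL, bR)" by (cases p)
    have g: "good \<alpha> \<epsilon> A B bL bR" and pos: "bL > 0" "bR > 0" using Dg pD p by auto
    obtain K where K: "\<And>c n. in_class \<alpha> \<epsilon> A B c n \<Longrightarrow> partition_fn c n bL bR \<le> K * exp (c*(bL+bR)/24)"
      using g unfolding good_def by blast
    have "\<forall>c n. in_class \<alpha> \<epsilon> A B c n \<longrightarrow> \<bar>ln (partition_fn c n bL bR) - c/24 * (bL + bR)\<bar> \<le> ln (max K 1)"
    proof (intro allI impI)
      fix c n assume cl: "in_class \<alpha> \<epsilon> A B c n"
      have "\<bar>ln (partition_fn c n bL bR) - c*(bL+bR)/24\<bar> \<le> ln (max K 1)"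
        by (rule logb[OF vacuum[OF cl pos] K[OF cl]])
      then show "\<bar>ln (partition_fn c n bL bR) - c/24 * (bL + bR)\<bar> \<le> ln (max K 1)" by simp
    qed
    then show "case p of (bL, bR) \<Rightarrow> \<exists>K. \<forall>c n. in_class \<alpha> \<epsilon> A B c n \<longrightarrow>
            \<bar>ln (partition_fn c n bL bR) - c/24 * (bL + bR)\<bar> \<le> K" unfolding p by auto
  next
    fix bL bR :: real assume pos: "bL > 0" "bR > 0" and SD: "(4*pi^2/bL, 4*pi^2/bR) \<in> D_alpha \<alpha>"
    have g: "good \<alpha> \<epsilon> A B (4*pi^2/bL) (4*pi^2/bR)" and pos': "4*pi^2/bL > 0" "4*pi^2/bR > 0"
      using Dg[OF SD] by auto
    obtain K where K: "\<And>c n. in_class \<alpha> \<epsilon> A B c n \<Longrightarrow> partition_fn c n (4*pi^2/bL) (4*pi^2/bR) \<le> K * exp (c*(4*pi^2/bL+4*pi^2/bR)/24)"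
      using g unfolding good_def by blast
    have E: "c*(4*pi^2/bL+4*pi^2/bR)/24 = pi^2 * c / 6 * (1/bL + 1/bR)" for c :: real
      by (simp add: field_simps)
    show "\<exists>K. \<forall>c n. in_class \<alpha> \<epsilon> A B c n \<longrightarrow> \<bar>ln (partition_fn c n bL bR) - pi^2 * c / 6 * (1/bL + 1/bR)\<bar> \<le> K"
    proof (intro exI allI impI)
      fix c n assume cl: "in_class \<alpha> \<epsilon> A B c n"
      have cft: "unitary_modular_cft c n" using cl unfolding in_class_def by auto
      have Zeq: "partition_fn c n bL bR = partition_fn c n (4*pi^2/bL) (4*pi^2/bR)"
        using cft pos unfolding unitary_modular_cft_def by blast
      have "\<bar>ln (partition_fn c n bL bR) - c*(4*pi^2/bL+4*pi^2/bR)/24\<bar> \<le> ln (max K 1)"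
        unfolding Zeq by (rule logb[OF vacuum[OF cl pos'] K[OF cl]])
      then show "\<bar>ln (partition_fn c n bL bR) - pi^2 * c / 6 * (1/bL + 1/bR)\<bar> \<le> ln (max K 1)"
        unfolding E .
    qed
  qed
qed



end
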